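(* Let $n,m\in\mathbb{N}_0$. Then $L_n^{(m)}(2+\sqrt2)=0$, or $L_n^{(m)}(2-\sqrt2)=0$, if and only if $n=2$ and $m=0$.
   Context: Generalized Laguerre polynomials: $L_n^{(\alpha)}(x)=\sum_{j=0}^n(-1)^j\binom{n+\alpha}{n-j}\frac{x^j}{j!}$. *)

theory Defs
  imports Complex_Main
begin

definition laguerre :: "nat \<Rightarrow> nat \<Rightarrow> real \<Rightarrow> real" where
  "laguerre n m x = (\<Sum>j=0..n. (-1)^j * real ((n + m) choose (n - j)) * x ^ j / fact j)"

end

theory Submission
  imports Defs
begin

lemma sq2_int: "(X::int)^2 = 2 * Y^2 \<Longrightarrow> Y = 0"
proof (induction "nat \<bar>Y\<bar>" arbitrary: X Y rule: less_induct)
  case less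
  show ?case
  proof (rule ccontr)
    assume Y0: "Y \<noteq> 0"
    have "even (X^2)" using less.prems by simp
    then have "even X" by simp
    then obtain X' where X': "X = 2 * X'" by blast
    then have "Y^2 = 2 * X'^2" using less.prems by (simp add: power2_eq_square)
    then have "even (Y^2)" by simp
    then have "even Y" by simp
    then obtain Y' where Y': "Y = 2 * Y'" by blast
    have e: "X'^2 = 2 * Y'^2" using \<open>Y^2 = 2 * X'^2\<close> Y' by (simp add: power2_eq_square)
    have "nat \<bar>Y'\<bar> < nat \<bar>Y\<bar>" using Y' Y0 by auto
    then have "Y' = 0" using less.hyps e by blast
    then show False using Y' Y0 by simp
  qed
qed

fun AB :: "nat \<Rightarrow> int \<times> int" where
  "AB 0 = (1, 0)"
| "AB (Suc j) = (2 * fst (AB j) + 2 * snd (AB j), fst (AB j) + 2 * snd (AB j))"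

lemma AB_pow:
  assumes "s^2 = (1::real)"
  shows "(2 + s * sqrt 2)^j = of_int (fst (AB j)) + s * of_int (snd (AB j)) * sqrt 2"
proof (induction j)
  case 0
  then show ?case by simp
next
  case (Suc j)
  have "(2 + s * sqrt 2)^Suc j = (2 + s * sqrt 2) * (of_int (fst (AB j)) + s * of_int (snd (AB j)) * sqrt 2)"
    using Suc by simp
  also have "\<dots> = 2 * of_int (fst (AB j)) + s^2 * (sqrt 2)^2 * of_int (snd (AB j))
       + s * (of_int (fst (AB j)) + 2 * of_int (snd (AB j))) * sqrt 2"
    by (simp add: algebra_simps power2_eq_square)
  also have "\<dots> = of_int (fst (AB (Suc j))) + s * of_int (snd (AB (Suc j))) * sqrt 2"
    using assms by simp
  finally show ?case .
qed

lemma AB_norm: "(fst (AB j))^2 - 2 * (snd (AB j))^2 = 2^j"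
  by (induction j) (simp_all add: power2_eq_square algebra_simps)

lemma AB_det: "snd (AB j) * fst (AB (Suc j)) - fst (AB j) * snd (AB (Suc j)) = - (2^j)"
  using AB_norm[of j] by (simp add: power2_eq_square algebra_simps)

definition cf :: "nat \<Rightarrow> nat \<Rightarrow> nat \<Rightarrow> int" where
  "cf n m j = (-1)^j * int ((n + m) choose (n - j)) * int (fact n div fact j)"

lemma lag_eq: "fact n * laguerre n m x = (\<Sum>j=0..n. of_int (cf n m j) * x^j)"
  unfolding laguerre_def sum_distrib_left
proof (rule sum.cong[OF refl])
  fix j assume "j \<in> {0..n}"
  then have "j \<le> n" by simp
  then have d: "(fact j :: nat) dvd fact n" by (rule fact_dvd)
  have "real (fact n div fact j) = real (fact n) / real (fact j)"
    using d by (rule real_of_nat_div)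
  then show "fact n * ((-1)^j * real ((n + m) choose (n - j)) * x ^ j / fact j) =
        of_int (cf n m j) * x ^ j"
    unfolding cf_def by (simp add: of_nat_fact)
qed

lemma cf_dvd:
  assumes "j + 2 \<le> n"
  shows "int ((n+m)*(n+m-1)) dvd cf n m j"
proof -
  obtain i where n: "n = j + i + 2" using assms le_add_diff_inverse2 by (metis add.assoc add.commute)
  define N where "N = j + i + m"
  have k: "n - j = i + 2" using n by simp
  have f1: "fact n = fact j * (fact (i+2) * (n choose j))"
    using binomial_fact_lemma[of j n] n by (simp add: k algebra_simps)
  have q: "fact n div fact j = fact (i+2) * (n choose j)"
    using f1 by simp
  have bf: "fact (i+2) * fact (N - i) * ((N+2) choose (i+2)) = fact (N+2)"
    using binomial_fact_lemma[of "i+2" "N+2"] N_def by simp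
  have bf2: "fact i * fact (N - i) * (N choose i) = fact N"
    using binomial_fact_lemma[of i N] N_def by simp
  have "(fact (i+2) * ((N+2) choose (i+2))) * fact (N - i)
      = ((N+2)*(N+1)) * (fact i * (N choose i)) * fact (N - i)"
    using bf bf2 by (simp add: algebra_simps)
  then have e: "fact (i+2) * ((N+2) choose (i+2)) = ((N+2)*(N+1)) * (fact i * (N choose i))"
    by simp
  have nm: "n + m = N + 2" by (simp add: n N_def)
  have "((n + m) choose (n - j)) * (fact n div fact j)
      = (fact (i+2) * ((N+2) choose (i+2))) * (n choose j)"
    unfolding q k nm by (simp only: mult_ac)
  also have "\<dots> = ((N+2)*(N+1)) * (fact i * (N choose i) * (n choose j))"
    unfolding e by (simp only: mult_ac)
  finally have "((n + m) choose (n - j)) * (fact n div fact j)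
      = ((N+2)*(N+1)) * (fact i * (N choose i) * (n choose j))" .
  moreover have "(n+m)*(n+m-1) = (N+2)*(N+1)" by (simp add: n N_def)
  ultimately have "(n+m)*(n+m-1) dvd ((n + m) choose (n - j)) * (fact n div fact j)" by (metis dvd_triv_left)
  then have "int ((n+m)*(n+m-1)) dvd int (((n + m) choose (n - j)) * (fact n div fact j))"
    using int_dvd_int_iff by blast
  then show ?thesis unfolding cf_def by (metis dvd_mult mult.assoc of_nat_mult)
qed

lemma cf_top: "cf n m n = (-1)^n"
  unfolding cf_def by simp


lemma odd_dvd_pow2: "odd (q::nat) \<Longrightarrow> q dvd 2^k \<Longrightarrow> q = 1"
proof -
  assume a: "odd q" "q dvd 2^k"
  have "coprime q (2^k)" using a(1) by (simp add: coprime_right_2_iff_odd)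
  then show "q = 1" using coprime_common_divisor[OF _ dvd_refl a(2)] by simp
qed

lemma sum_split3: "(\<Sum>j=0..Suc k. f j) = (\<Sum>j<k. f j) + f k + (f (Suc k) :: int)"
proof -
  have "(\<Sum>j=0..Suc k. f j) = (\<Sum>j<Suc (Suc k). f j)"
    by (simp add: atLeast0AtMost lessThan_Suc_atMost)
  then show ?thesis by simp
qed

lemma key:
  assumes s: "s^2 = (1::real)" and L: "laguerre (Suc k) m (2 + s * sqrt 2) = 0"
  shows "(\<Sum>j<k. cf (Suc k) m j * (snd (AB k) * fst (AB j) - fst (AB k) * snd (AB j)))
          = cf (Suc k) m (Suc k) * 2^k"
proof -
  define n where "n = Suc k"
  define X where "X = (\<Sum>j=0..n. cf n m j * fst (AB j))"
  define Y where "Y = (\<Sum>j=0..n. cf n m j * snd (AB j))"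
  have "0 = fact n * laguerre n m (2 + s * sqrt 2)" using L n_def by simp
  also have "\<dots> = (\<Sum>j=0..n. of_int (cf n m j) * (2 + s * sqrt 2)^j)" by (rule lag_eq)
  also have "\<dots> = (\<Sum>j=0..n. of_int (cf n m j) * of_int (fst (AB j))
       + s * sqrt 2 * (of_int (cf n m j) * of_int (snd (AB j))))"
    by (simp add: AB_pow[OF s] algebra_simps)
  also have "\<dots> = of_int X + s * sqrt 2 * of_int Y"
    unfolding X_def Y_def by (simp add: sum.distrib sum_distrib_left)
  finally have e: "of_int X = - s * sqrt 2 * of_int Y" by linarith
  then have "(of_int X)^2 = s^2 * (sqrt 2)^2 * (of_int Y :: real)^2"
    by (simp add: power_mult_distrib)
  then have "(of_int (X^2) :: real) = of_int (2 * Y^2)" using s by simp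
  then have "X^2 = 2 * Y^2" by linarith
  then have Y0: "Y = 0" by (rule sq2_int)
  then have X0: "X = 0" using e by simp
  have "0 = snd (AB k) * X - fst (AB k) * Y" using X0 Y0 by simp
  also have "\<dots> = (\<Sum>j=0..Suc k. cf n m j * (snd (AB k) * fst (AB j) - fst (AB k) * snd (AB j)))"
    unfolding X_def Y_def n_def sum_distrib_left sum_subtractf[symmetric] by (rule sum.cong) (simp_all add: algebra_simps)
  also have "\<dots> = (\<Sum>j<k. cf n m j * (snd (AB k) * fst (AB j) - fst (AB k) * snd (AB j)))
      - cf n m (Suc k) * 2^k"
  proof -
    have d: "cf n m (Suc k) * (snd (AB k) * fst (AB (Suc k)) - fst (AB k) * snd (AB (Suc k)))
        = - (cf n m (Suc k) * 2^k)"
      by (subst AB_det) simp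
    show ?thesis unfolding sum_split3 d by simp
  qed
  finally show ?thesis unfolding n_def by simp
qed

theorem proposition3:
  fixes n m :: nat
  shows "(laguerre n m (2 + sqrt 2) = 0 \<or> laguerre n m (2 - sqrt 2) = 0) \<longleftrightarrow> (n = 2 \<and> m = 0)"
proof
  assume "n = 2 \<and> m = 0"
  then have nm: "n = 2" "m = 0" by auto
  have "laguerre 2 0 (2 + sqrt 2) = 0"
    unfolding laguerre_def by (simp add: numeral_2_eq_2 power2_eq_square algebra_simps)
  then show "laguerre n m (2 + sqrt 2) = 0 \<or> laguerre n m (2 - sqrt 2) = 0" using nm by simp
next
  assume H: "laguerre n m (2 + sqrt 2) = 0 \<or> laguerre n m (2 - sqrt 2) = 0"
  obtain s :: real where s: "s^2 = 1" and L: "laguerre n m (2 + s * sqrt 2) = 0"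
  proof (cases "laguerre n m (2 + sqrt 2) = 0")
    case True
    then show ?thesis using that[of 1] by simp
  next
    case False
    then have "laguerre n m (2 + (-1) * sqrt 2) = 0" using H by simp
    then show ?thesis using that[of "-1"] by simp
  qed
  show "n = 2 \<and> m = 0"
  proof (cases n)
    case 0
    then show ?thesis using L by (simp add: laguerre_def)
  next
    case (Suc k)
    have K: "(\<Sum>j<k. cf (Suc k) m j * (snd (AB k) * fst (AB j) - fst (AB k) * snd (AB j)))
          = cf (Suc k) m (Suc k) * 2^k"
      using key[OF s] L Suc by simp
    show ?thesis
    proof (cases "n + m = 2")
      case True
      then show ?thesis using K Suc by (cases k) (auto simp: cf_top)
    next
      case False
      show ?thesis
      proof (cases k)
        case 0
        then show ?thesis using K by (simp add: cf_top)
      next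
        case (Suc k')
        then have ge3: "n + m \<ge> 3" using False \<open>n = Suc k\<close> by auto
        define q where "q = (if odd (n + m) then n + m else n + m - 1)"
        have oodd: "odd q" using ge3 unfolding q_def by auto
        have o3: "q \<ge> 3"
        proof (cases "odd (n + m)")
          case True
          then show ?thesis using ge3 by (simp add: q_def)
        next
          case False
          then have "n + m \<noteq> 3" by presburger
          then show ?thesis using ge3 False by (simp add: q_def)
        qed
        have odv: "q dvd (n + m) * (n + m - 1)" unfolding q_def by auto
        have "int q dvd (\<Sum>j<k. cf (Suc k) m j * (snd (AB k) * fst (AB j) - fst (AB k) * snd (AB j)))"
        proof (rule dvd_sum)
          fix j assume "j \<in> {..<k}"
          then have "j + 2 \<le> n" using \<open>n = Suc k\<close> by simp
          then have "int ((n+m)*(n+m-1)) dvd cf n m j" by (rule cf_dvd)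
          then have "int q dvd cf n m j" using odv by (meson dvd_trans int_dvd_int_iff)
          then show "int q dvd cf (Suc k) m j * (snd (AB k) * fst (AB j) - fst (AB k) * snd (AB j))"
            using \<open>n = Suc k\<close> by simp
        qed
        then have "int q dvd (-1)^(Suc k) * 2^k" using K by (simp add: cf_top)
        then have "int q dvd (-1)^k * 2^k" by (simp add: power_Suc)
        then have "int q dvd (-1)^k * ((-1)^k * 2^k)" by (rule dvd_mult)
        moreover have "(-1::int)^k * ((-1)^k * 2^k) = 2^k"
          by (simp add: mult.assoc[symmetric] power_add[symmetric])
        ultimately have "int q dvd 2^k" by simp
        then have "q dvd 2^k" by (metis int_dvd_int_iff of_nat_numeral of_nat_power)
        then have "q = 1" using oodd odd_dvd_pow2 by blast
        then show ?thesis using o3 by simp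
      qed
    qed
  qed
qed

end
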